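(* Let $A,B\subseteq2^\omega$ and suppose $B$ has empty interior in $2^\omega$. Regard $A,B$ also as subsets of the Baire space $\omega^\omega$. If $A\le^*_L B$ then $A\le_L B$, and if $A\le^*_W B$ then $A\le_W B$.
   Context: $2^\omega$ (Cantor space) and $\omega^\omega$ (Baire space) carry the product topologies and the metric $d(x,y)=2^{-\min\{n:x(n)\neq y(n)\}}$ ($d(x,x)=0$). For $A,B\subseteq2^\omega$: $A\le_W B$ iff $A=f^{-1}(B)$ for some continuous $f:2^\omega\to2^\omega$; $A\le_L B$ iff this holds with $f$ Lipschitz with constant $1$ (i.e. $d(f(x),f(y))\le d(x,y)$). $A\le^*_W B$ (resp. $A\le^*_L B$) means $A=f^{-1}(B)$ for some continuous (resp. $1$-Lipschitz) $f:\omega^\omega\to\omega^\omega$, with $A,B$ viewed as subsets of $\omega^\omega$. *)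

theory Defs
  imports Main "HOL.Real"
begin

text \<open>The standard metric on sequence spaces (Cantor space for 'a = bool,
  Baire space for 'a = nat): d(x,y) = 2^(-min{n. x n ~= y n}), d(x,x) = 0.\<close>
definition seqdist :: "(nat \<Rightarrow> 'a) \<Rightarrow> (nat \<Rightarrow> 'a) \<Rightarrow> real" where
  "seqdist x y = (if x = y then 0 else (1/2) ^ (LEAST n. x n \<noteq> y n))"

text \<open>Continuity w.r.t. this metric (which induces the product topology).\<close>
definition seq_continuous :: "((nat \<Rightarrow> 'a) \<Rightarrow> (nat \<Rightarrow> 'b)) \<Rightarrow> bool" where
  "seq_continuous f \<longleftrightarrow>
     (\<forall>x. \<forall>e>0. \<exists>\<delta>>0. \<forall>y. seqdist x y < \<delta> \<longrightarrow> seqdist (f x) (f y) < e)"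

definition seq_lipschitz1 :: "((nat \<Rightarrow> 'a) \<Rightarrow> (nat \<Rightarrow> 'b)) \<Rightarrow> bool" where
  "seq_lipschitz1 f \<longleftrightarrow> (\<forall>x y. seqdist (f x) (f y) \<le> seqdist x y)"

text \<open>Wadge and Lipschitz reducibility on the space nat => 'a
  (Cantor space: 'a = bool, i.e. <=_W, <=_L; Baire space: 'a = nat, i.e. <=*_W, <=*_L).\<close>
definition wadge_le :: "(nat \<Rightarrow> 'a) set \<Rightarrow> (nat \<Rightarrow> 'a) set \<Rightarrow> bool" where
  "wadge_le A B \<longleftrightarrow> (\<exists>f :: (nat \<Rightarrow> 'a) \<Rightarrow> (nat \<Rightarrow> 'a). seq_continuous f \<and> A = f -` B)"

definition lipschitz_le :: "(nat \<Rightarrow> 'a) set \<Rightarrow> (nat \<Rightarrow> 'a) set \<Rightarrow> bool" where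
  "lipschitz_le A B \<longleftrightarrow> (\<exists>f :: (nat \<Rightarrow> 'a) \<Rightarrow> (nat \<Rightarrow> 'a). seq_lipschitz1 f \<and> A = f -` B)"

definition empty_interior :: "(nat \<Rightarrow> 'a) set \<Rightarrow> bool" where
  "empty_interior B \<longleftrightarrow> \<not> (\<exists>x r. r > 0 \<and> {y. seqdist x y < r} \<subseteq> B)"

definition cantor_to_baire :: "(nat \<Rightarrow> bool) \<Rightarrow> (nat \<Rightarrow> nat)" where
  "cantor_to_baire x = (\<lambda>n. if x n then 1 else 0)"

end

theory Submission
  imports Defs
begin

definition agree :: "nat \<Rightarrow> (nat \<Rightarrow> 'a) \<Rightarrow> (nat \<Rightarrow> 'a) \<Rightarrow> bool" where
  "agree n x y \<longleftrightarrow> (\<forall>i<n. x i = y i)"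

lemma dist_lt_iff: "seqdist x y < (1/2)^n \<longleftrightarrow> agree (Suc n) x y"
proof (cases "x = y")
  case True then show ?thesis by (simp add: seqdist_def agree_def)
next
  case False
  define k where "k = (LEAST n. x n \<noteq> y n)"
  have ex: "\<exists>n. x n \<noteq> y n" using False by auto
  have k1: "x k \<noteq> y k" unfolding k_def by (rule LeastI_ex[OF ex])
  have k2: "\<And>i. i < k \<Longrightarrow> x i = y i" unfolding k_def using not_less_Least by blast
  have "seqdist x y = (1/2)^k" using False by (simp add: seqdist_def k_def)
  moreover have "((1/2::real)^k < (1/2)^n) \<longleftrightarrow> n < k" by (simp add: power_strict_decreasing_iff)
  moreover have "agree (Suc n) x y \<longleftrightarrow> n < k"
    unfolding agree_def using k1 k2 by (metis less_Suc_eq_le not_le_imp_less order_less_le_trans le_less_trans less_imp_le_nat)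
  ultimately show ?thesis by simp
qed

lemma agree_mono: "agree n x y \<Longrightarrow> m \<le> n \<Longrightarrow> agree m x y"
  by (auto simp: agree_def)

lemma lip_agree: "seq_lipschitz1 (f :: (nat \<Rightarrow> 'a) \<Rightarrow> (nat \<Rightarrow> 'b)) \<longleftrightarrow> (\<forall>x y n. agree n x y \<longrightarrow> agree n (f x) (f y))"
proof
  assume L: "seq_lipschitz1 f"
  show "\<forall>(x::nat\<Rightarrow>'a) y n. agree n x y \<longrightarrow> agree n (f x) (f y)"
  proof (intro allI impI)
    fix x y :: "nat \<Rightarrow> 'a" and n assume a: "agree n x y"
    show "agree n (f x) (f y)"
    proof (cases n)
      case 0 then show ?thesis by (simp add: agree_def)
    next
      case (Suc m)
      have "seqdist x y < (1/2)^m" using a Suc dist_lt_iff by blast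
      moreover have "seqdist (f x) (f y) \<le> seqdist x y" using L seq_lipschitz1_def by blast
      ultimately have "seqdist (f x) (f y) < (1/2)^m" by linarith
      then show ?thesis using Suc dist_lt_iff by blast
    qed
  qed
next
  assume R: "\<forall>x y n. agree n x y \<longrightarrow> agree n (f x) (f y)"
  show "seq_lipschitz1 f" unfolding seq_lipschitz1_def
  proof (intro allI)
    fix x y
    show "seqdist (f x) (f y) \<le> seqdist x y"
    proof (cases "f x = f y")
      case True then show ?thesis by (simp add: seqdist_def)
    next
      case False
      then have xy: "x \<noteq> y" by auto
      define k where "k = (LEAST n. x n \<noteq> y n)"
      have k2: "\<And>i. i < k \<Longrightarrow> x i = y i" unfolding k_def using not_less_Least by blast
      have "agree k (f x) (f y)" using R k2 agree_def by blast
      define k' where "k' = (LEAST n. f x n \<noteq> f y n)"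
      have ex: "\<exists>n. f x n \<noteq> f y n" using False by auto
      have k1: "f x k' \<noteq> f y k'" unfolding k'_def by (rule LeastI_ex[OF ex])
      have "k \<le> k'" using \<open>agree k (f x) (f y)\<close> k1 unfolding agree_def by (meson not_le)
      then have "(1/2::real)^k' \<le> (1/2)^k" by (simp add: power_decreasing)
      then show ?thesis using False xy by (simp add: seqdist_def k_def k'_def)
    qed
  qed
qed

lemma cont_to_agree:
  assumes "seq_continuous f"
  shows "\<exists>m. \<forall>y. agree m x y \<longrightarrow> agree n (f x) (f y)"
proof (cases n)
  case 0 then show ?thesis by (simp add: agree_def)
next
  case (Suc n')
  have "(1/2::real)^n' > 0" by simp
  then obtain d where d: "d > 0" "\<And>y. seqdist x y < d \<Longrightarrow> seqdist (f x) (f y) < (1/2)^n'"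
    using assms unfolding seq_continuous_def by blast
  obtain m where m: "(1/2::real)^m < d" using real_arch_pow_inv[OF d(1), of "1/2"] by auto
  show ?thesis
  proof (intro exI allI impI)
    fix y assume "agree (Suc m) x y"
    then have "seqdist x y < d" using dist_lt_iff m by (metis less_trans)
    then show "agree n (f x) (f y)" using d(2) dist_lt_iff Suc by blast
  qed
qed

lemma agree_to_cont:
  assumes "\<And>x n. \<exists>m. \<forall>y. agree m x y \<longrightarrow> agree n (f x) (f y)"
  shows "seq_continuous f"
  unfolding seq_continuous_def
proof (intro allI impI)
  fix x and e :: real assume e: "e > 0"
  obtain n where n: "(1/2::real)^n < e" using real_arch_pow_inv[OF e, of "1/2"] by auto
  obtain m where m: "\<forall>y. agree m x y \<longrightarrow> agree (Suc n) (f x) (f y)" using assms by blast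
  show "\<exists>\<delta>>0. \<forall>y. seqdist x y < \<delta> \<longrightarrow> seqdist (f x) (f y) < e"
  proof (intro exI conjI allI impI)
    show "(1/2::real)^m > 0" by simp
    fix y assume "seqdist x y < (1/2)^m"
    then have "agree (Suc m) x y" using dist_lt_iff by blast
    then have "agree m x y" using agree_mono by fastforce
    then have "seqdist (f x) (f y) < (1/2)^n" using m dist_lt_iff by blast
    then show "seqdist (f x) (f y) < e" using n by linarith
  qed
qed

definition bb :: "(nat \<Rightarrow> nat) \<Rightarrow> (nat \<Rightarrow> bool)" where "bb y = (\<lambda>i. y i = 1)"

lemma c_agree: "agree n x y \<Longrightarrow> agree n (cantor_to_baire x) (cantor_to_baire y)"
  by (auto simp: agree_def cantor_to_baire_def)

lemma bc: "bb (cantor_to_baire x) = x" by (auto simp: bb_def cantor_to_baire_def)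

lemma c_inj: "inj cantor_to_baire" by (metis bc injI)

lemma cb: "\<forall>k. \<not> 1 < y k \<Longrightarrow> cantor_to_baire (bb y) = y"
  by (auto simp: bb_def cantor_to_baire_def fun_eq_iff) (metis One_nat_def less_one linorder_neqE_nat)

lemma main:
  fixes A B :: "(nat \<Rightarrow> bool) set"
  assumes EI: "empty_interior B"
  shows "\<exists>r. (\<forall>x y n. agree n x y \<longrightarrow> agree n (r x) (r y)) \<and>
      (\<forall>y. r y \<in> B \<longleftrightarrow> y \<in> cantor_to_baire ` B)"
proof -
  have ex: "\<And>x k. \<exists>z. seqdist x z < (1/2)^k \<and> z \<notin> B"
  proof -
    fix x :: "nat \<Rightarrow> bool" and k :: nat
    have "(1/2::real)^k > 0" by simp
    then show "\<exists>z. seqdist x z < (1/2)^k \<and> z \<notin> B" using EI unfolding empty_interior_def by blast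
  qed
  define W where "W x k = (SOME z. seqdist x z < (1/2::real)^k \<and> z \<notin> B)" for x k
  have Wp: "\<And>x k. agree (Suc k) x (W x k) \<and> W x k \<notin> B"
    unfolding W_def using someI_ex[OF ex] dist_lt_iff by blast
  define p where "p y k = (\<lambda>i::nat. i < k \<and> y i = (1::nat))" for y :: "nat \<Rightarrow> nat" and k
  define r where "r y = (if \<exists>k. 1 < y k then W (p y (LEAST k. 1 < y k)) (LEAST k. 1 < y k) else bb y)" for y
  have pref: "r y i = bb y i" if "\<forall>k<n. \<not> 1 < y k" "i < n" for y n i
  proof (cases "\<exists>k. 1 < y k")
    case True
    define K where "K = (LEAST k. 1 < y k)"
    have "1 < y K" unfolding K_def using True LeastI_ex by metis
    then have "n \<le> K" using that(1) not_le by blast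
    then have "i < K" using that(2) by simp
    have "r y = W (p y K) K" using True by (simp add: r_def K_def)
    moreover have "W (p y K) K i = p y K i" using Wp[of K "p y K"] \<open>i < K\<close> by (simp add: agree_def)
    ultimately show ?thesis using \<open>i < K\<close> by (simp add: p_def bb_def)
  next
    case False then show ?thesis by (simp add: r_def)
  qed
  have lip: "agree n (r x) (r y)" if a: "agree n x y" for x y n
  proof (cases "\<exists>k<n. 1 < x k")
    case True
    define K where "K = (LEAST k. 1 < x k)"
    define K' where "K' = (LEAST k. 1 < y k)"
    obtain k where k: "k < n" "1 < x k" using True by blast
    have "K \<le> k" unfolding K_def using k Least_le by metis
    have xK: "1 < x K" unfolding K_def using k LeastI by metis
    have xK2: "\<And>j. j < K \<Longrightarrow> \<not> 1 < x j" unfolding K_def using not_less_Least by blast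
    have "K < n" using \<open>K \<le> k\<close> k by simp
    then have yK: "1 < y K" using xK a by (simp add: agree_def)
    have "\<And>j. j < K \<Longrightarrow> \<not> 1 < y j" using xK2 a \<open>K < n\<close> by (simp add: agree_def)
    then have "K' = K" unfolding K'_def using yK by (metis LeastI not_less_Least linorder_neqE_nat)
    have "p x K = p y K" using a \<open>K < n\<close> by (auto simp: p_def agree_def fun_eq_iff)
    then have "r x = r y" using xK yK \<open>K' = K\<close> unfolding r_def K_def[symmetric] K'_def[symmetric]
      by auto
    then show ?thesis by (simp add: agree_def)
  next
    case False
    then have F2: "\<forall>k<n. \<not> 1 < y k" using a by (simp add: agree_def)
    show ?thesis unfolding agree_def
    proof (intro allI impI)
      fix i assume "i < n"
      then show "r x i = r y i" using pref[OF _ \<open>i<n\<close>] False F2 a by (simp add: bb_def agree_def)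
    qed
  qed
  have pre: "r y \<in> B \<longleftrightarrow> y \<in> cantor_to_baire ` B" for y
  proof (cases "\<exists>k. 1 < y k")
    case True
    then have "r y \<notin> B" using Wp by (simp add: r_def)
    moreover have "y \<notin> cantor_to_baire ` B" using True by (auto simp: cantor_to_baire_def split: if_splits)
    ultimately show ?thesis by simp
  next
    case False
    then have "r y = bb y" by (simp add: r_def)
    moreover have "y = cantor_to_baire (bb y)" using False cb by metis
    ultimately show ?thesis using c_inj by (metis bc image_iff)
  qed
  show ?thesis using lip pre by blast
qed

theorem lemma4p1:
  fixes A B :: "(nat \<Rightarrow> bool) set"
  assumes "empty_interior B"
  shows "(lipschitz_le (cantor_to_baire ` A) (cantor_to_baire ` B) \<longrightarrow> lipschitz_le A B)
       \<and> (wadge_le (cantor_to_baire ` A) (cantor_to_baire ` B) \<longrightarrow> wadge_le A B)"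
proof -
  obtain r where rl: "\<And>x y n. agree n x y \<Longrightarrow> agree n (r x) (r y)"
    and rp: "\<And>y. r y \<in> B \<longleftrightarrow> y \<in> cantor_to_baire ` B"
    using main[OF assms] by blast
  have preim: "A = (\<lambda>x. r (f (cantor_to_baire x))) -` B"
    if "cantor_to_baire ` A = f -` (cantor_to_baire ` B)" for f
  proof -
    have "x \<in> A \<longleftrightarrow> cantor_to_baire x \<in> cantor_to_baire ` A" for x
      using c_inj by (simp add: inj_image_mem_iff)
    then show ?thesis using that rp by auto
  qed
  show ?thesis
  proof (intro conjI impI)
    assume "lipschitz_le (cantor_to_baire ` A) (cantor_to_baire ` B)"
    then obtain f :: "(nat \<Rightarrow> nat) \<Rightarrow> (nat \<Rightarrow> nat)" where f: "seq_lipschitz1 f"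
      "cantor_to_baire ` A = f -` (cantor_to_baire ` B)" unfolding lipschitz_le_def by blast
    have "seq_lipschitz1 (\<lambda>x. r (f (cantor_to_baire x)))"
      unfolding lip_agree using f(1) rl c_agree unfolding lip_agree by blast
    then show "lipschitz_le A B" unfolding lipschitz_le_def using preim[OF f(2)] by blast
  next
    assume "wadge_le (cantor_to_baire ` A) (cantor_to_baire ` B)"
    then obtain f :: "(nat \<Rightarrow> nat) \<Rightarrow> (nat \<Rightarrow> nat)" where f: "seq_continuous f"
      "cantor_to_baire ` A = f -` (cantor_to_baire ` B)" unfolding wadge_le_def by blast
    have "seq_continuous (\<lambda>x. r (f (cantor_to_baire x)))"
    proof (rule agree_to_cont)
      fix x n
      obtain m where m: "\<forall>y. agree m (cantor_to_baire x) y \<longrightarrow> agree n (f (cantor_to_baire x)) (f y)"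
        using cont_to_agree[OF f(1)] by blast
      show "\<exists>m. \<forall>y. agree m x y \<longrightarrow> agree n (r (f (cantor_to_baire x))) (r (f (cantor_to_baire y)))"
        using m c_agree rl by blast
    qed
    then show "wadge_le A B" unfolding wadge_le_def using preim[OF f(2)] by blast
  qed
qed

end
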